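(* Let $\{A_n\}_{n\ge1}$ be i.i.d. positive random variables, $X_1=\log A_1$, with $\mathbb EX_1<0$ and $\mathbb E|X_1|^q<\infty$ for some integer $q\ge2$. Let $P$ be the transition kernel on $[0,\infty)$ of the Markov chain $Z_{n+1}=A_{n+1}Z_n+1$, i.e. $PV(x)=\mathbb E[V(A_1x+1)]$, and let $V(x)=(\log x)^q\mathbb 1_{\{x>e\}}+\mathbb 1_{\{x\le e\}}$ for $x\ge0$. Then there exist constants $c>0$, $K<\infty$ and $b<\infty$ such that, with $C=[0,K]$, $$PV(x)\le V(x)-cV(x)^{(q-1)/q}+b\mathbb 1_C(x)\qquad\text{for all }x\ge0.$$ *)

theory Defs
  imports "HOL-Probability.Probability"
begin

definition lyapV :: "nat \<Rightarrow> real \<Rightarrow> real" where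
  "lyapV q x = (if x > exp 1 then (ln x) ^ q else 1)"

end

theory Submission
  imports Defs
begin


lemma term_bound:
  fixes L z :: real and n k :: nat
  assumes L: "L \<ge> 1" and k: "2 \<le> k" "k \<le> n+2"
  shows "z^k * L^(n+2-k) \<le> L^n * z^2 + \<bar>z\<bar>^(n+2)"
proof -
  have "z^k * L^(n+2-k) \<le> \<bar>z\<bar>^k * L^(n+2-k)"
    by (intro mult_right_mono) (use L in \<open>auto simp: power_abs[symmetric]\<close>)
  also have "\<dots> \<le> L^n * z^2 + \<bar>z\<bar>^(n+2)"
  proof (cases "\<bar>z\<bar> \<le> L")
    case True
    have e: "\<bar>z\<bar>^k = \<bar>z\<bar>^(k-2) * z^2" using k
      by (metis add_diff_inverse_nat not_less power_add power2_abs mult.commute)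
    have "\<bar>z\<bar>^k * L^(n+2-k) = z^2 * (\<bar>z\<bar>^(k-2) * L^(n+2-k))" using e by simp
    also have "\<dots> \<le> z^2 * (L^(k-2) * L^(n+2-k))"
      by (intro mult_left_mono mult_right_mono power_mono) (use True L in auto)
    also have "L^(k-2) * L^(n+2-k) = L^(k-2 + (n+2-k))" by (simp add: power_add)
    also have "k-2 + (n+2-k) = n" using k by simp
    finally have "\<bar>z\<bar>^k * L^(n+2-k) \<le> L^n * z^2" by (simp add: mult.commute)
    moreover have "0 \<le> \<bar>z\<bar>^(n+2)" by simp
    ultimately show ?thesis by linarith
  next
    case False
    have "\<bar>z\<bar>^k * L^(n+2-k) \<le> \<bar>z\<bar>^k * \<bar>z\<bar>^(n+2-k)"
      by (intro mult_left_mono power_mono) (use False L in auto)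
    also have "\<dots> = \<bar>z\<bar>^(n+2)" using k by (simp flip: power_add)
    finally have "\<bar>z\<bar>^k * L^(n+2-k) \<le> \<bar>z\<bar>^(n+2)" .
    moreover have "0 \<le> L^n * z^2" using L by simp
    ultimately show ?thesis by linarith
  qed
  finally show ?thesis .
qed

lemma binom_bound:
  fixes L z :: real and n :: nat
  assumes L: "L \<ge> 1"
  shows "(L+z)^(n+2) \<le> L^(n+2) + real (n+2) * L^(n+1) * z + 2^(n+2) * (L^n * z^2 + \<bar>z\<bar>^(n+2))"
proof -
  let ?q = "n+2"
  let ?t = "\<lambda>k. of_nat (?q choose k) * z^k * L^(?q-k) :: real"
  have "(L+z)^?q = (z+L)^?q" by (simp add: add.commute)
  also have "\<dots> = (\<Sum>k\<le>?q. ?t k)" by (rule binomial_ring)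
  also have "\<dots> = ?t 0 + (?t 1 + (\<Sum>k=2..?q. ?t k))"
    by (simp add: atMost_atLeast0 sum.atLeast_Suc_atMost numeral_2_eq_2)
  also have "?t 0 = L^?q" by simp
  also have "?t 1 = real ?q * L^(n+1) * z" by simp
  also have "(\<Sum>k=2..?q. ?t k) \<le> (\<Sum>k=2..?q. of_nat (?q choose k) * (L^n * z^2 + \<bar>z\<bar>^?q))"
  proof (rule sum_mono)
    fix k assume "k \<in> {2..?q}"
    then show "?t k \<le> of_nat (?q choose k) * (L^n * z^2 + \<bar>z\<bar>^?q)"
      using term_bound[OF L, of k n z] by (simp add: mult.assoc mult_left_mono)
  qed
  also have "\<dots> = (\<Sum>k=2..?q. of_nat (?q choose k)) * (L^n * z^2 + \<bar>z\<bar>^?q)"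
    by (rule sum_distrib_right[symmetric])
  also have "\<dots> \<le> (\<Sum>k\<le>?q. of_nat (?q choose k)) * (L^n * z^2 + \<bar>z\<bar>^?q)"
    using L by (intro mult_right_mono sum_mono2) (auto intro!: add_nonneg_nonneg)
  also have "(\<Sum>k\<le>?q. of_nat (?q choose k)) = (2::real)^?q"
    using choose_row_sum[of ?q] by (metis of_nat_numeral of_nat_power of_nat_sum)
  finally show ?thesis by simp
qed

lemma binom_nonneg:
  fixes L z :: real and n :: nat
  assumes L: "L \<ge> 1"
  shows "0 \<le> L^(n+2) + real (n+2) * L^(n+1) * z + (real (n+2))^2 * (L^n * z^2 + (abs z)^(n+2))"
proof -
  have d: "(real (n+2))^2 * (L^n * z^2 + (abs z)^(n+2)) = (real (n+2))^2 * (L^n * z^2) + (real (n+2))^2 * (abs z)^(n+2)"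
    by (rule distrib_left)
  have p1: "0 \<le> (real (n+2))^2 * (abs z)^(n+2)" by simp
  have p2: "0 \<le> (real (n+2))^2 * (L^n * z^2)" using L by simp
  have p3: "0 \<le> L^(n+2)" using L by simp
  show ?thesis
  proof (cases "real (n+2) * z \<ge> - L")
    case True
    have "real (n+2) * L^(n+1) * z = L^n * (real (n+2) * z * L)" by (simp add: algebra_simps)
    also have "\<dots> \<ge> L^n * (-L * L)"
      using True L by (intro mult_left_mono mult_right_mono) auto
    finally have "real (n+2) * L^(n+1) * z \<ge> -(L^(n+2))" by (simp add: power2_eq_square algebra_simps)
    then show ?thesis using d p1 p2 by linarith
  next
    case False
    have "real (n+2) * \<bar>z\<bar> \<ge> real (n+2) * (-z)" by (intro mult_left_mono) auto
    then have zl: "real (n+2) * \<bar>z\<bar> \<ge> L" using False by linarith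
    have "(real (n+2))^2 * (L^n * z^2) = L^n * (real (n+2) * \<bar>z\<bar>) * (real (n+2) * \<bar>z\<bar>)"
      by (simp add: power2_eq_square algebra_simps)
    also have "\<dots> \<ge> L^n * L * (real (n+2) * \<bar>z\<bar>)"
      using zl L by (intro mult_right_mono mult_left_mono) auto
    finally have a: "(real (n+2))^2 * (L^n * z^2) \<ge> real (n+2) * L^(n+1) * \<bar>z\<bar>" by (simp add: algebra_simps)
    have "real (n+2) * L^(n+1) * (-z) \<le> real (n+2) * L^(n+1) * \<bar>z\<bar>"
      using L by (intro mult_left_mono) auto
    then show ?thesis using a d p1 p3 by linarith
  qed
qed



lemma V_drift_pt:
  fixes L z y :: real and n :: nat
  assumes L: "L \<ge> 1" and y: "y > 0" and le: "ln y \<le> L + z"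
  shows "lyapV (n+2) y \<le> 1 + (L^(n+2) + real (n+2) * L^(n+1) * z
           + (2^(n+2) + (real (n+2))^2) * (L^n * z^2 + \<bar>z\<bar>^(n+2)))"
proof -
  have nn: "0 \<le> L^n * z^2 + \<bar>z\<bar>^(n+2)" using L by simp
  have e: "(2^(n+2) + (real (n+2))^2) * (L^n * z^2 + \<bar>z\<bar>^(n+2))
     = 2^(n+2) * (L^n * z^2 + \<bar>z\<bar>^(n+2)) + (real (n+2))^2 * (L^n * z^2 + \<bar>z\<bar>^(n+2))"
    by (rule distrib_right)
  have q1: "0 \<le> 2^(n+2) * (L^n * z^2 + \<bar>z\<bar>^(n+2))" using nn by simp
  have q2: "0 \<le> (real (n+2))^2 * (L^n * z^2 + \<bar>z\<bar>^(n+2))" using nn by simp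
  show ?thesis
  proof (cases "y > exp 1")
    case True
    then have "ln y > 1" using y by (metis ln_exp ln_less_cancel_iff exp_gt_zero)
    then have "(ln y)^(n+2) \<le> (L+z)^(n+2)" using le by (intro power_mono) auto
    with binom_bound[OF L, of z n] have "(ln y)^(n+2) \<le> L^(n+2) + real (n+2) * L^(n+1) * z + 2^(n+2) * (L^n * z^2 + \<bar>z\<bar>^(n+2))"
      by linarith
    then show ?thesis using True e q2 unfolding lyapV_def by simp
  next
    case False
    then show ?thesis using binom_nonneg[OF L, of n z] e q1 unfolding lyapV_def by simp
  qed
qed

lemma pow_sum_le:
  fixes a b :: real and q :: nat
  assumes "a \<ge> 0" "b \<ge> 0"
  shows "(a+b)^q \<le> 2^q * (a^q + b^q)"
proof -
  have "(a+b)^q \<le> (2 * max a b)^q" using assms by (intro power_mono) auto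
  also have "\<dots> = 2^q * (max a b)^q" by (simp add: power_mult_distrib)
  also have "(max a b)^q \<le> a^q + b^q" using assms by (cases "a \<le> b") (auto simp: max_def)
  then have "2^q * (max a b)^q \<le> 2^q * (a^q + b^q)" by simp
  finally show ?thesis .
qed

lemma V_bound:
  fixes a x :: real and q :: nat
  assumes x: "x \<ge> 0"
  shows "lyapV q (a*x+1) \<le> 1 + 2^q * ((ln (x+1))^q + \<bar>ln a\<bar>^q)"
proof (cases "a*x+1 > exp 1")
  case True
  have "exp 1 > (1::real)" by simp
  then have "a*x > 0" using True by linarith
  then have a: "a > 0" and xp: "x > 0" using x by (auto simp: zero_less_mult_iff)
  have "ln (a*x+1) \<le> ln (x+1) + \<bar>ln a\<bar>"
  proof (cases "a \<le> 1")
    case True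
    have "a*x+1 \<le> x+1" using True x mult_right_mono[of a 1 x] by simp
    then have "ln (a*x+1) \<le> ln (x+1)" using a xp by (subst ln_le_cancel_iff) (auto intro: add_pos_pos)
    then show ?thesis by linarith
  next
    case False
    have "a*x+1 \<le> a*(x+1)" using False by (simp add: algebra_simps)
    then have "ln (a*x+1) \<le> ln (a*(x+1))" using a xp by (subst ln_le_cancel_iff) (auto intro: add_pos_pos)
    also have "\<dots> = ln a + ln (x+1)" using a xp by (simp add: ln_mult)
    finally show ?thesis by linarith
  qed
  moreover have "ln (a*x+1) \<ge> 0" using True a xp by simp
  ultimately have "(ln (a*x+1))^q \<le> (ln (x+1) + \<bar>ln a\<bar>)^q" by (intro power_mono) auto
  also have "\<dots> \<le> 2^q * ((ln (x+1))^q + \<bar>ln a\<bar>^q)" using x by (intro pow_sum_le) auto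
  finally show ?thesis using True unfolding lyapV_def by simp
next
  case False
  have "0 \<le> 2^q * ((ln (x+1))^q + \<bar>ln a\<bar>^q)" using x by simp
  then show ?thesis using False unfolding lyapV_def by simp
qed

lemma lyapV_ge1: "lyapV q x \<ge> 1"
proof (cases "x > exp 1")
  case True
  then have "ln x > 1" by (metis ln_exp ln_less_cancel_iff exp_gt_zero less_trans)
  then show ?thesis using True unfolding lyapV_def by (simp add: one_le_power)
qed (simp add: lyapV_def)

lemma lyapV_meas[measurable]: "lyapV q \<in> borel_measurable borel"
  unfolding lyapV_def by measurable



theorem mainTheorem10:
  fixes M :: "'a measure" and A :: "nat \<Rightarrow> 'a \<Rightarrow> real" and q :: nat
  assumes "prob_space M"
    and rv: "\<And>n. n \<ge> 1 \<Longrightarrow> A n \<in> borel_measurable M"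
    and indep: "prob_space.indep_vars M (\<lambda>_. borel) A {1..}"
    and ident: "\<And>n. n \<ge> 1 \<Longrightarrow> distr M borel (A n) = distr M borel (A 1)"
    and pos: "\<And>n. n \<ge> 1 \<Longrightarrow> AE \<omega> in M. A n \<omega> > 0"
    and q2: "q \<ge> 2"
    and intX: "integrable M (\<lambda>\<omega>. ln (A 1 \<omega>))"
    and negmean: "prob_space.expectation M (\<lambda>\<omega>. ln (A 1 \<omega>)) < 0"
    and moment: "integrable M (\<lambda>\<omega>. \<bar>ln (A 1 \<omega>)\<bar> ^ q)"
  shows "\<exists>c K b. c > 0 \<and>
           (\<forall>x::real. x \<ge> 0 \<longrightarrow>
              integrable M (\<lambda>\<omega>. lyapV q (A 1 \<omega> * x + 1)) \<and>
              prob_space.expectation M (\<lambda>\<omega>. lyapV q (A 1 \<omega> * x + 1))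
                \<le> lyapV q x - c * lyapV q x powr (real (q - 1) / real q)
                   + b * indicator {0..K} x)"
proof -
  interpret prob_space M by fact
  obtain n where qn: "q = n+2" using q2 by (metis add.commute le_Suc_ex)
  have A1[measurable]: "A 1 \<in> borel_measurable M" using rv by simp
  have apos: "AE \<omega> in M. A 1 \<omega> > 0" using pos by simp
  define X where "X \<omega> = ln (A 1 \<omega>)" for \<omega>
  have X_meas[measurable]: "X \<in> borel_measurable M" unfolding X_def by measurable
  \<comment> \<open>Step 1: a perturbation with negative mean\<close>
  define s where "s i \<omega> = ln (A 1 \<omega> + inverse (real (Suc i)))" for i \<omega>
  have s_meas[measurable]: "s i \<in> borel_measurable M" for i unfolding s_def by measurable
  have absbound: "\<bar>ln (a + d)\<bar> \<le> \<bar>ln a\<bar> + 1" if a: "a > 0" and d: "0 < d" "d \<le> 1" for a d :: real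
  proof -
    have lo: "ln a \<le> ln (a+d)" using a d by (subst ln_le_cancel_iff) auto
    have "ln (a+d) \<le> ln (a+1)" using a d by (subst ln_le_cancel_iff) auto
    also have "ln (a+1) \<le> \<bar>ln a\<bar> + 1"
    proof (cases "a \<le> 1")
      case True
      have "ln (a+1) \<le> ln 2" using a True by (subst ln_le_cancel_iff) auto
      then show ?thesis using ln_2_less_1 by linarith
    next
      case False
      have "ln (a+1) \<le> ln (2*a)" using a False by (subst ln_le_cancel_iff) auto
      also have "\<dots> = ln 2 + ln a" using a by (simp add: ln_mult)
      finally show ?thesis using ln_2_less_1 by linarith
    qed
    finally show ?thesis using lo by linarith
  qed
  have intw: "integrable M (\<lambda>\<omega>. \<bar>X \<omega>\<bar> + 1)" using intX unfolding X_def by auto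
  have conv: "AE \<omega> in M. (\<lambda>i. s i \<omega>) \<longlonglongrightarrow> X \<omega>"
      using apos
  proof eventually_elim
    case (elim \<omega>)
    have "(\<lambda>i. A 1 \<omega> + inverse (real (Suc i))) \<longlonglongrightarrow> A 1 \<omega> + 0"
      by (intro tendsto_add tendsto_const LIMSEQ_inverse_real_of_nat)
    then show ?case unfolding s_def X_def using elim by (auto intro!: tendsto_ln)
  qed
  have bnd: "AE \<omega> in M. norm (s i \<omega>) \<le> \<bar>X \<omega>\<bar> + 1" for i
    using apos
  proof eventually_elim
    case (elim \<omega>)
    have "inverse (real (Suc i)) \<le> 1" by (simp add: inverse_le_1_iff)
    then show ?case unfolding s_def X_def using elim
      by (auto intro!: absbound)
  qed
  have lim: "(\<lambda>i. integral\<^sup>L M (s i)) \<longlonglongrightarrow> integral\<^sup>L M X"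
    by (rule integral_dominated_convergence[OF X_meas s_meas intw conv bnd])
  have "integral\<^sup>L M X < 0" using negmean unfolding X_def by simp
  from order_tendstoD(2)[OF lim this] obtain i where i: "integral\<^sup>L M (s i) < 0"
    by (auto simp: eventually_sequentially)
  define \<delta> where "\<delta> = inverse (real (Suc i))"
  have \<delta>: "0 < \<delta>" "\<delta> \<le> 1" unfolding \<delta>_def by (auto simp: inverse_le_1_iff)
  define Z where "Z \<omega> = ln (A 1 \<omega> + \<delta>)" for \<omega>
  have Z_meas[measurable]: "Z \<in> borel_measurable M" unfolding Z_def by measurable
  have Zs: "Z = s i" unfolding Z_def s_def \<delta>_def by auto
  define m where "m = integral\<^sup>L M Z"
  have m: "m < 0" using i Zs m_def by simp
  have intZ: "integrable M Z" unfolding Zs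
    by (rule integrable_dominated_convergence2[where w="\<lambda>\<omega>. \<bar>X \<omega>\<bar> + 1" and f=X]) (rule X_meas s_meas intw conv bnd)+
  have Zabs: "AE \<omega> in M. \<bar>Z \<omega>\<bar> \<le> \<bar>X \<omega>\<bar> + 1"
    using apos by eventually_elim (auto simp: Z_def X_def intro!: absbound \<delta>)
  have intXq: "integrable M (\<lambda>\<omega>. 2^q * (\<bar>X \<omega>\<bar>^q + 1))"
    using moment unfolding X_def by auto
  have intZq: "integrable M (\<lambda>\<omega>. \<bar>Z \<omega>\<bar>^q)"
  proof (rule Bochner_Integration.integrable_bound[OF intXq])
    show "(\<lambda>\<omega>. \<bar>Z \<omega>\<bar>^q) \<in> borel_measurable M" by measurable
    show "AE \<omega> in M. norm (\<bar>Z \<omega>\<bar>^q) \<le> norm (2^q * (\<bar>X \<omega>\<bar>^q + 1::real))"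
      using Zabs
    proof eventually_elim
      case (elim \<omega>)
      have "\<bar>Z \<omega>\<bar>^q \<le> (\<bar>X \<omega>\<bar> + 1)^q" using elim by (intro power_mono) auto
      also have "\<dots> \<le> 2^q * (\<bar>X \<omega>\<bar>^q + 1^q)" by (intro pow_sum_le) auto
      finally show ?case by simp
    qed
  qed
  have intZ2: "integrable M (\<lambda>\<omega>. (Z \<omega>)^2)"
  proof (rule Bochner_Integration.integrable_bound[where f="\<lambda>\<omega>. 1 + \<bar>Z \<omega>\<bar>^q"])
    show "integrable M (\<lambda>\<omega>. 1 + \<bar>Z \<omega>\<bar>^q)" using intZq by auto
    show "(\<lambda>\<omega>. (Z \<omega>)^2) \<in> borel_measurable M" by measurable
    show "AE \<omega> in M. norm ((Z \<omega>)^2) \<le> norm (1 + \<bar>Z \<omega>\<bar>^q)"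
    proof (intro AE_I2)
      fix \<omega>
      show "norm ((Z \<omega>)^2) \<le> norm (1 + \<bar>Z \<omega>\<bar>^q)"
      proof (cases "\<bar>Z \<omega>\<bar> \<le> 1")
        case True
        then have "\<bar>Z \<omega>\<bar>^2 \<le> 1^2" by (intro power_mono) auto
        then have a: "(Z \<omega>)^2 \<le> 1" by (simp add: power2_abs)
        have "0 \<le> \<bar>Z \<omega>\<bar>^q" by simp
        then have "(Z \<omega>)^2 \<le> 1 + \<bar>Z \<omega>\<bar>^q" using a by linarith
        then show ?thesis by simp
      next
        case False
        then have "\<bar>Z \<omega>\<bar>^2 \<le> \<bar>Z \<omega>\<bar>^q" using q2 by (intro power_increasing) auto
        then show ?thesis by (simp add: power2_abs)
      qed
    qed
  qed
  define C :: real where "C = 2^q + (real q)^2"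
  have C0: "C \<ge> 0" unfolding C_def by simp
  define EZ2 where "EZ2 = integral\<^sup>L M (\<lambda>\<omega>. (Z \<omega>)^2)"
  define EZq where "EZq = integral\<^sup>L M (\<lambda>\<omega>. \<bar>Z \<omega>\<bar>^q)"
  have EZ2: "EZ2 \<ge> 0" unfolding EZ2_def by (intro integral_nonneg_AE) auto
  have EZq: "EZq \<ge> 0" unfolding EZq_def by (intro integral_nonneg_AE) auto
  define c where "c = real q * (- m) / 2"
  have c: "c > 0" unfolding c_def using m q2 by (simp add: mult_pos_neg)
  define S where "S = 1 + C * EZ2 + C * EZq"
  define L0 where "L0 = S / c"
  define K where "K = max (exp 1) (max (1/\<delta>) (exp L0))"
  define EXq where "EXq = integral\<^sup>L M (\<lambda>\<omega>. \<bar>X \<omega>\<bar>^q)"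
  define B where "B = 1 + 2^q * ((ln (K+1))^q + EXq)"
  define b where "b = B + c * (1 + (ln (K+1))^q)"
  have intXq': "integrable M (\<lambda>\<omega>. \<bar>X \<omega>\<bar>^q)" using moment unfolding X_def by simp
  have K1: "K \<ge> exp 1" unfolding K_def by simp
  have K0: "K > 0" using K1 by (meson exp_gt_zero less_le_trans)
  have intV: "integrable M (\<lambda>\<omega>. lyapV q (A 1 \<omega> * x + 1))"
    and EV: "integral\<^sup>L M (\<lambda>\<omega>. lyapV q (A 1 \<omega> * x + 1)) \<le> 1 + 2^q * ((ln (x+1))^q + EXq)"
    if x: "x \<ge> 0" for x
  proof -
    have intF: "integrable M (\<lambda>\<omega>. 1 + 2^q * ((ln (x+1))^q + \<bar>X \<omega>\<bar>^q))"
      using intXq' by auto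
    have pt: "lyapV q (A 1 \<omega> * x + 1) \<le> 1 + 2^q * ((ln (x+1))^q + \<bar>X \<omega>\<bar>^q)" for \<omega>
      unfolding X_def by (rule V_bound[OF x])
    show int: "integrable M (\<lambda>\<omega>. lyapV q (A 1 \<omega> * x + 1))"
    proof (rule Bochner_Integration.integrable_bound[OF intF])
      show "(\<lambda>\<omega>. lyapV q (A 1 \<omega> * x + 1)) \<in> borel_measurable M" by measurable
      show "AE \<omega> in M. norm (lyapV q (A 1 \<omega> * x + 1)) \<le> norm (1 + 2^q * ((ln (x+1))^q + \<bar>X \<omega>\<bar>^q))"
      proof (intro AE_I2)
        fix \<omega>
        have "0 \<le> lyapV q (A 1 \<omega> * x + 1)" using lyapV_ge1[of q] by (meson order_trans zero_le_one)
        then show "norm (lyapV q (A 1 \<omega> * x + 1)) \<le> norm (1 + 2^q * ((ln (x+1))^q + \<bar>X \<omega>\<bar>^q))"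
          using pt[of \<omega>] by simp
      qed
    qed
    have "integral\<^sup>L M (\<lambda>\<omega>. lyapV q (A 1 \<omega> * x + 1)) \<le> integral\<^sup>L M (\<lambda>\<omega>. 1 + 2^q * ((ln (x+1))^q + \<bar>X \<omega>\<bar>^q))"
      using int intF pt by (intro integral_mono) auto
    also have "\<dots> = 1 + 2^q * ((ln (x+1))^q + EXq)"
      unfolding EXq_def using intXq' by (simp add: integral_add integral_mult_right prob_space)
    finally show "integral\<^sup>L M (\<lambda>\<omega>. lyapV q (A 1 \<omega> * x + 1)) \<le> 1 + 2^q * ((ln (x+1))^q + EXq)" .
  qed
  have large: "integral\<^sup>L M (\<lambda>\<omega>. lyapV q (A 1 \<omega> * x + 1))
      \<le> lyapV q x - c * lyapV q x powr (real (q - 1) / real q)"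
    if x: "x > K" for x
  proof -
    have xe: "x > exp 1" using x K1 by linarith
    have x0: "x > 0" using xe by (meson exp_gt_zero less_trans)
    define L where "L = ln x"
    have L1: "L > 1" unfolding L_def using xe x0 by (metis ln_exp ln_less_cancel_iff exp_gt_zero)
    have "exp L0 < x" using x unfolding K_def by linarith
    then have LL0: "L0 < L" unfolding L_def using x0 by (metis ln_exp ln_less_cancel_iff exp_gt_zero)
    have "1/\<delta> < x" using x unfolding K_def by linarith
    then have ix: "1/x < \<delta>" using \<delta> x0 by (simp add: divide_less_eq mult.commute)
    define F where "F \<omega> = 1 + (L^(n+2) + real (n+2) * L^(n+1) * Z \<omega>
           + (2^(n+2) + (real (n+2))^2) * (L^n * (Z \<omega>)^2 + \<bar>Z \<omega>\<bar>^(n+2)))" for \<omega>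
    have intF: "integrable M F" unfolding F_def using intZ intZ2 intZq unfolding qn by auto
    have pt: "AE \<omega> in M. lyapV q (A 1 \<omega> * x + 1) \<le> F \<omega>"
      using apos
    proof eventually_elim
      case (elim \<omega>)
      have y: "A 1 \<omega> * x + 1 > 0" using elim x0 by (simp add: add_pos_pos)
      have "A 1 \<omega> * x + 1 = x * (A 1 \<omega> + 1/x)" using x0 by (simp add: field_simps)
      also have "\<dots> \<le> x * (A 1 \<omega> + \<delta>)" using ix x0 by (intro mult_left_mono) auto
      finally have "ln (A 1 \<omega> * x + 1) \<le> ln (x * (A 1 \<omega> + \<delta>))"
        using y by (subst ln_le_cancel_iff) auto
      also have "\<dots> = L + Z \<omega>" unfolding L_def Z_def using x0 elim \<delta> by (simp add: ln_mult)
      finally show ?case unfolding qn F_def by (intro V_drift_pt y) (use L1 in auto)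
    qed
    have "integral\<^sup>L M (\<lambda>\<omega>. lyapV q (A 1 \<omega> * x + 1)) \<le> integral\<^sup>L M F"
      using intV[of x] x0 intF pt by (intro integral_mono_AE) auto
    also have "integral\<^sup>L M F = 1 + (L^(n+2) + real (n+2) * L^(n+1) * m + C * (L^n * EZ2 + EZq))"
      unfolding F_def m_def C_def EZ2_def EZq_def qn using intZ intZ2 intZq unfolding qn
      by (simp add: integral_add integral_mult_right prob_space)
    also have "\<dots> \<le> L^(n+2) - c * L^(n+1)"
    proof -
      have Ln: "L^n \<ge> 1" using L1 by (simp add: one_le_power)
      have "1 + C * (L^n * EZ2 + EZq) \<le> L^n * S"
      proof -
        have a: "1 * (C * EZq) \<le> L^n * (C * EZq)" using Ln C0 EZq by (intro mult_right_mono) auto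
        have e1: "C * (L^n * EZ2 + EZq) = L^n * (C * EZ2) + C * EZq" by (simp add: algebra_simps)
        have e2: "L^n * S = L^n + L^n * (C * EZ2) + L^n * (C * EZq)" unfolding S_def by (simp add: algebra_simps)
        show ?thesis using a Ln e1 e2 by linarith
      qed
      also have "L^n * S \<le> L^n * (c * L)"
      proof -
        have "S = c * L0" unfolding L0_def using c by simp
        also have "\<dots> \<le> c * L" using c LL0 by simp
        finally show ?thesis using Ln by (intro mult_left_mono) auto
      qed
      finally have h: "1 + C * (L^n * EZ2 + EZq) \<le> c * L^(n+1)" by (simp add: algebra_simps)
      have "real (n+2) * L^(n+1) * m = - 2 * c * L^(n+1)" unfolding c_def qn by simp
      then show ?thesis using h by linarith
    qed
    also have "L^(n+2) - c * L^(n+1) = lyapV q x - c * lyapV q x powr (real (q - 1) / real q)"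
    proof -
      have V: "lyapV q x = L^q" unfolding lyapV_def L_def using xe by simp
      have L0p: "L > 0" using L1 by simp
      have "(L^q) powr (real (q - 1) / real q) = (L powr real q) powr (real (q - 1) / real q)"
        using L0p by (simp add: powr_realpow)
      also have "\<dots> = L powr (real q * (real (q - 1) / real q))" by (simp add: powr_powr)
      also have "real q * (real (q - 1) / real q) = real (q - 1)" using q2 by simp
      also have "L powr real (q - 1) = L^(q-1)" by (rule powr_realpow[OF L0p])
      also have "q - 1 = n+1" using qn by simp
      finally show ?thesis using V qn by simp
    qed
    finally show ?thesis .
  qed
  have small: "integral\<^sup>L M (\<lambda>\<omega>. lyapV q (A 1 \<omega> * x + 1))
      \<le> lyapV q x - c * lyapV q x powr (real (q - 1) / real q) + b"
    if x: "0 \<le> x" "x \<le> K" for x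
  proof -
    have lnle: "ln (x+1) \<le> ln (K+1)" using x by (subst ln_le_cancel_iff) auto
    have "(ln (x+1))^q \<le> (ln (K+1))^q" using lnle x by (intro power_mono) auto
    then have "2^q * ((ln (x+1))^q + EXq) \<le> 2^q * ((ln (K+1))^q + EXq)"
      by (intro mult_left_mono) auto
    then have E: "integral\<^sup>L M (\<lambda>\<omega>. lyapV q (A 1 \<omega> * x + 1)) \<le> B"
      using EV[OF x(1)] unfolding B_def by linarith
    have Vle: "lyapV q x \<le> 1 + (ln (K+1))^q"
    proof (cases "x > exp 1")
      case True
      then have x0: "x > 0" by (meson exp_gt_zero less_trans)
      have "ln x \<le> ln (K+1)" using x x0 by (subst ln_le_cancel_iff) auto
      moreover have "ln x \<ge> 0"
      proof -
        have "exp 1 > (1::real)" by simp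
        then have "x \<ge> 1" using True by linarith
        then show ?thesis by simp
      qed
      ultimately have "(ln x)^q \<le> (ln (K+1))^q" by (intro power_mono) auto
      then show ?thesis using True unfolding lyapV_def by simp
    next
      case False
      have "0 \<le> ln (K+1)" using K0 by simp
      then show ?thesis using False unfolding lyapV_def by simp
    qed
    have V1: "lyapV q x \<ge> 1" by (rule lyapV_ge1)
    have "real (q - 1) / real q \<le> 1" using q2 by simp
    then have "lyapV q x powr (real (q - 1) / real q) \<le> lyapV q x powr 1"
      using V1 by (rule powr_mono)
    also have "\<dots> = lyapV q x" using V1 by simp
    finally have "c * lyapV q x powr (real (q - 1) / real q) \<le> c * (1 + (ln (K+1))^q)"
      using Vle c by (intro mult_left_mono) auto
    then show ?thesis using E V1 unfolding b_def by linarith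
  qed
  show ?thesis
  proof (intro exI conjI allI impI)
    show "c > 0" by fact
    fix x :: real assume x: "x \<ge> 0"
    show "integrable M (\<lambda>\<omega>. lyapV q (A 1 \<omega> * x + 1))" by (rule intV[OF x])
    show "expectation (\<lambda>\<omega>. lyapV q (A 1 \<omega> * x + 1))
        \<le> lyapV q x - c * lyapV q x powr (real (q - 1) / real q) + b * indicator {0..K} x"
    proof (cases "x \<le> K")
      case True
      then show ?thesis using small[OF x True] x by simp
    next
      case False
      then show ?thesis using large[of x] by simp
    qed
  qed
qed

end
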